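(* Let $\Omega\subset\mathbb{R}^n$ be a bounded simply connected open set with smooth boundary, $\sigma_0\in C^2(\overline{\Omega})$ with $\sigma_0>0$ on $\overline{\Omega}$, and let $u_0$ satisfy $\nabla\cdot\sigma_0\nabla u_0=0$ in $\Omega$ with $u_0|_{\partial\Omega}=f\in C^{2,\alpha}(\partial\Omega)$ and $\nabla u_0\neq0$ on $\overline{\Omega}$. Then there exists $C>0$ depending on $u_0$ and $\Omega$ such that $$\|h\|_{L^2(\Omega)}\le C\,\|\nabla u_0\cdot\nabla h\|_{L^2(\Omega)}$$ for every $h\in H^1(\Omega)$ with $h|_{\partial\Omega}=0$. *)

theory Defs
  imports "HOL-Analysis.Analysis"
begin

definition pderiv :: "('a::euclidean_space \<Rightarrow> real) \<Rightarrow> 'a \<Rightarrow> 'a \<Rightarrow> real" where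
  "pderiv f i x = frechet_derivative f (at x) i"

definition grad :: "('a::euclidean_space \<Rightarrow> real) \<Rightarrow> 'a \<Rightarrow> 'a" where
  "grad f x = (\<Sum>i\<in>Basis. pderiv f i x *\<^sub>R i)"

definition divergence :: "('a::euclidean_space \<Rightarrow> 'a) \<Rightarrow> 'a \<Rightarrow> real" where
  "divergence V x = (\<Sum>i\<in>Basis. pderiv (\<lambda>y. V y \<bullet> i) i x)"

fun Ck :: "nat \<Rightarrow> 'a::euclidean_space set \<Rightarrow> ('a \<Rightarrow> real) \<Rightarrow> bool" where
  "Ck 0 S f = continuous_on S f"
| "Ck (Suc k) S f = (continuous_on S f \<and> f differentiable_on S \<and>
                      (\<forall>i\<in>Basis. Ck k S (pderiv f i)))"

definition Cinf :: "'a::euclidean_space set \<Rightarrow> ('a \<Rightarrow> real) \<Rightarrow> bool" where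
  "Cinf S f = (\<forall>k. Ck k S f)"

(* C^2 up to the boundary: restriction of a C^2 function on an open neighbourhood of the closure *)
definition C2_closure :: "'a::euclidean_space set \<Rightarrow> ('a \<Rightarrow> real) \<Rightarrow> bool" where
  "C2_closure \<Omega> s = (\<exists>U F. open U \<and> closure \<Omega> \<subseteq> U \<and> Ck 2 U F \<and> (\<forall>x\<in>closure \<Omega>. F x = s x))"

(* smooth boundary: locally a regular sublevel set of a C^\<infinity> defining function *)
definition smooth_boundary :: "'a::euclidean_space set \<Rightarrow> bool" where
  "smooth_boundary \<Omega> = (\<forall>z\<in>frontier \<Omega>. \<exists>r>0. \<exists>\<phi>. Cinf (ball z r) \<phi> \<and> grad \<phi> z \<noteq> 0 \<and>
      \<Omega> \<inter> ball z r = {x\<in>ball z r. \<phi> x < 0})"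

(* C^{2,alpha}(\<partial>\<Omega>): restriction to the boundary of a C^{2,alpha}(R^n) function *)
definition C2alpha_boundary :: "real \<Rightarrow> 'a::euclidean_space set \<Rightarrow> ('a \<Rightarrow> real) \<Rightarrow> bool" where
  "C2alpha_boundary \<alpha> \<Omega> f = (\<exists>F. Ck 2 UNIV F \<and>
      (\<exists>M. \<forall>i\<in>Basis. \<forall>j\<in>Basis. \<forall>x y.
          \<bar>pderiv (pderiv F i) j x - pderiv (pderiv F i) j y\<bar> \<le> M * norm (x - y) powr \<alpha>) \<and>
      (\<forall>x\<in>frontier \<Omega>. F x = f x))"

definition test_fun :: "'a::euclidean_space set \<Rightarrow> ('a \<Rightarrow> real) \<Rightarrow> bool" where
  "test_fun \<Omega> \<phi> = (Cinf UNIV \<phi> \<and> compact (closure {x. \<phi> x \<noteq> 0}) \<and> closure {x. \<phi> x \<noteq> 0} \<subseteq> \<Omega>)"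

definition weak_grad :: "'a::euclidean_space set \<Rightarrow> ('a \<Rightarrow> real) \<Rightarrow> ('a \<Rightarrow> 'a) \<Rightarrow> bool" where
  "weak_grad \<Omega> h g = (\<forall>\<phi>. test_fun \<Omega> \<phi> \<longrightarrow> (\<forall>i\<in>Basis.
      (LINT x:\<Omega>|lborel. h x * pderiv \<phi> i x) = - (LINT x:\<Omega>|lborel. (g x \<bullet> i) * \<phi> x)))"

definition L2sq :: "'a::euclidean_space set \<Rightarrow> ('a \<Rightarrow> real) \<Rightarrow> ennreal" where
  "L2sq \<Omega> h = (\<integral>\<^sup>+ x\<in>\<Omega>. ennreal ((h x)\<^sup>2) \<partial>lborel)"

definition H1 :: "'a::euclidean_space set \<Rightarrow> ('a \<Rightarrow> real) \<Rightarrow> ('a \<Rightarrow> 'a) \<Rightarrow> bool" where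
  "H1 \<Omega> h g = (h \<in> borel_measurable lborel \<and> g \<in> borel_measurable lborel \<and>
      L2sq \<Omega> h < \<infinity> \<and> L2sq \<Omega> (\<lambda>x. norm (g x)) < \<infinity> \<and> weak_grad \<Omega> h g)"

(* h \<in> H^1(\<Omega>) with vanishing boundary trace, i.e. h \<in> H^1_0(\<Omega>) = H^1-closure of C_c^\<infinity>(\<Omega>) *)
definition H1_0 :: "'a::euclidean_space set \<Rightarrow> ('a \<Rightarrow> real) \<Rightarrow> ('a \<Rightarrow> 'a) \<Rightarrow> bool" where
  "H1_0 \<Omega> h g = (H1 \<Omega> h g \<and> (\<exists>\<phi>::nat \<Rightarrow> 'a \<Rightarrow> real. (\<forall>k. test_fun \<Omega> (\<phi> k)) \<and>
      ((\<lambda>k. L2sq \<Omega> (\<lambda>x. \<phi> k x - h x) + L2sq \<Omega> (\<lambda>x. norm (grad (\<phi> k) x - g x)))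
         \<longlonglongrightarrow> 0)))"

end

theory Submission
  imports Defs
begin

lemma pderiv_at: "(f has_derivative D) (at x) \<Longrightarrow> pderiv f i x = D i"
  unfolding pderiv_def by (metis frechet_derivative_at)

lemma pderiv_local:
  assumes "open S" "x \<in> S" "\<And>y. y \<in> S \<Longrightarrow> f y = g y"
  shows "pderiv f i x = pderiv g i x"
proof -
  have "\<And>D. (f has_derivative D) (at x) \<longleftrightarrow> (g has_derivative D) (at x)"
    using assms has_derivative_transform_within_open[of f _ x UNIV S g]
      has_derivative_transform_within_open[of g _ x UNIV S f] by auto
  then show ?thesis unfolding pderiv_def frechet_derivative_def by simp
qed

lemma diff_local:
  assumes "open S" "x \<in> S" "\<And>y. y \<in> S \<Longrightarrow> f y = g y" "f differentiable at x"
  shows "g differentiable at x"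
  using assms has_derivative_transform_within_open unfolding differentiable_def by blast

lemma pderiv_zero_local:
  assumes "open S" "x \<in> S" "\<And>y. y \<in> S \<Longrightarrow> f y = 0"
  shows "pderiv f i x = 0"
  using pderiv_local[OF assms(1,2), of f "\<lambda>_. 0"] assms(3) by (simp add: pderiv_def)

lemma pderiv_mult:
  assumes "f differentiable at x" "g differentiable at x"
  shows "pderiv (\<lambda>y. f y * g y) i x = f x * pderiv g i x + pderiv f i x * g x"
proof -
  note h = has_derivative_mult[OF assms(1)[unfolded frechet_derivative_works] assms(2)[unfolded frechet_derivative_works]]
  from pderiv_at[OF h, of i] show ?thesis by (simp add: pderiv_def)
qed

lemma pderiv_exp:
  assumes "f differentiable at x"
  shows "pderiv (\<lambda>y. exp (f y)) i x = exp (f x) * pderiv f i x"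
proof -
  have "((\<lambda>y. exp (f y)) has_derivative (\<lambda>h. exp (f x) * frechet_derivative f (at x) h)) (at x)"
    using DERIV_compose_FDERIV[OF DERIV_exp assms[unfolded frechet_derivative_works]]
    by (simp add: mult.commute)
  from pderiv_at[OF this, of i] show ?thesis by (simp add: pderiv_def)
qed

lemma grad_inner_basis: assumes i: "i \<in> Basis" shows "grad f x \<bullet> i = pderiv f i x"
proof -
  have "grad f x \<bullet> i = (\<Sum>j\<in>Basis. pderiv f j x * (j \<bullet> i))" by (simp add: grad_def inner_sum_left)
  also have "\<dots> = (\<Sum>j\<in>Basis. if j = i then pderiv f j x else 0)"
    by (rule sum.cong) (auto simp: inner_Basis i)
  also have "\<dots> = pderiv f i x" using i by simp
  finally show ?thesis .
qed

lemma grad_inner: "grad f x \<bullet> grad g x = (\<Sum>i\<in>Basis. pderiv f i x * pderiv g i x)"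
  apply (subst euclidean_inner)
  apply (rule sum.cong)
   apply (simp_all add: grad_inner_basis)
  done

lemma DERIV_line:
  fixes f :: "'a::euclidean_space \<Rightarrow> real"
  assumes "f differentiable at (x + s *\<^sub>R v)"
  shows "((\<lambda>h. f (x + h *\<^sub>R v)) has_real_derivative pderiv f v (x + s *\<^sub>R v)) (at s)"
proof -
  let ?D = "frechet_derivative f (at (x + s *\<^sub>R v))"
  have lin: "linear ?D" using linear_frechet_derivative[OF assms] .
  have 1: "((\<lambda>h. x + h *\<^sub>R v) has_derivative (\<lambda>h. h *\<^sub>R v)) (at s)"
    by (auto intro!: derivative_eq_intros)
  have "((\<lambda>h. f (x + h *\<^sub>R v)) has_derivative (\<lambda>h. ?D (h *\<^sub>R v))) (at s)"
    using has_derivative_compose[OF 1 assms[unfolded frechet_derivative_works]] by (simp add: o_def)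
  moreover have "(\<lambda>h. ?D (h *\<^sub>R v)) = (*) (pderiv f v (x + s *\<^sub>R v))"
    by (rule ext) (simp add: linear_cmul[OF lin] pderiv_def)
  ultimately show ?thesis by (simp add: has_field_derivative_def)
qed

lemma integrable_cont_cpt:
  fixes f :: "'a::euclidean_space \<Rightarrow> real"
  assumes "continuous_on UNIV f" "compact K" "\<And>x. x \<notin> K \<Longrightarrow> f x = 0"
  shows "integrable lborel f"
proof -
  have "integrable lborel (\<lambda>x. indicator K x *\<^sub>R f x)"
    by (rule borel_integrable_compact[OF assms(2)]) (rule continuous_on_subset[OF assms(1)], simp)
  moreover have "(\<lambda>x. indicator K x *\<^sub>R f x) = f"
  proof
    fix x show "indicator K x *\<^sub>R f x = f x" using assms(3)[of x] by (cases "x \<in> K") auto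
  qed
  ultimately show ?thesis by simp
qed

lemma integral_pderiv_zero:
  fixes f :: "'a::euclidean_space \<Rightarrow> real"
  assumes diff: "\<And>x. f differentiable (at x)"
    and cont: "continuous_on UNIV (pderiv f v)"
    and K: "compact K" and zero: "\<And>x. x \<notin> K \<Longrightarrow> f x = 0"
  shows "integral\<^sup>L lborel (pderiv f v) = 0"
proof -
  have pz: "pderiv f v x = 0" if "x \<notin> K" for x
    apply (rule pderiv_zero_local[of "- K"])
    using K that zero by (auto simp: compact_imp_closed open_Compl simp del: Compl_iff)
  have fcont: "continuous_on UNIV f"
    using diff by (simp add: differentiable_imp_continuous_within continuous_at_imp_continuous_on)
  obtain R where R: "K \<subseteq> cball 0 R" "0 \<le> R"
  proof -
    obtain a where "\<forall>x\<in>K. norm x \<le> a" using compact_imp_bounded[OF K] by (auto simp: bounded_iff)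
    then have "K \<subseteq> cball 0 (max a 0)" "0 \<le> max a 0" by (auto simp: mem_cball_0)
    then show ?thesis using that by blast
  qed
  have cptL: "compact (cball (0::'a) R)" by simp
  obtain Bd where Bd: "\<And>x. \<bar>pderiv f v x\<bar> \<le> Bd"
  proof -
    have "bounded (pderiv f v ` cball 0 R)"
      by (rule compact_imp_bounded, rule compact_continuous_image[OF continuous_on_subset[OF cont] cptL]) simp
    then obtain B where B: "\<And>y. y \<in> pderiv f v ` cball 0 R \<Longrightarrow> norm y \<le> B" by (auto simp: bounded_iff)
    have "\<bar>pderiv f v x\<bar> \<le> max B 0" for x
    proof (cases "x \<in> cball 0 R")
      case True then show ?thesis using B[of "pderiv f v x"] by auto
    next
      case False then have "x \<notin> K" using R by auto
      then show ?thesis using pz by simp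
    qed
    then show ?thesis using that by blast
  qed
  define L where "L = cball (0::'a) (R + norm v)"
  define t where "t k = 1 / real (Suc k)" for k
  have tpos: "0 < t k" "t k \<le> 1" for k by (auto simp: t_def field_simps)
  have t0: "t \<longlonglongrightarrow> 0"
  proof -
    have "t = (\<lambda>n. inverse (real (Suc n)))" by (simp add: t_def fun_eq_iff inverse_eq_divide)
    then show ?thesis using LIMSEQ_inverse_real_of_nat by simp
  qed
  have tat: "filterlim t (at 0) sequentially"
    using t0 tpos(1) by (auto simp: filterlim_at intro!: always_eventually) (metis less_irrefl)
  define s where "s k x = (f (x + t k *\<^sub>R v) - f x) / t k" for k x
  have fmeas: "f \<in> borel_measurable borel" by (rule borel_measurable_continuous_onI[OF fcont])
  have fint: "integrable lborel f" by (rule integrable_cont_cpt[OF fcont K zero])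
  have transl: "integrable lborel (\<lambda>x. f (x + c)) \<and> integral\<^sup>L lborel (\<lambda>x. f (x + c)) = integral\<^sup>L lborel f" for c
  proof -
    have m: "(+) c \<in> measurable lborel borel" by simp
    have "integrable (distr lborel borel ((+) c)) f" using fint by (simp add: lborel_distr_plus)
    then have "integrable lborel (\<lambda>x. f (c + x))" using integrable_distr_eq[OF m fmeas] by simp
    moreover have "integral\<^sup>L (distr lborel borel ((+) c)) f = integral\<^sup>L lborel (\<lambda>x. f (c + x))"
      by (rule integral_distr[OF m fmeas])
    ultimately show ?thesis by (simp add: lborel_distr_plus add.commute)
  qed
  have sint: "integral\<^sup>L lborel (s k) = 0" for k
  proof -
    have "integral\<^sup>L lborel (s k) = (integral\<^sup>L lborel (\<lambda>x. f (x + t k *\<^sub>R v)) - integral\<^sup>L lborel f) / t k"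
      unfolding s_def using transl[of "t k *\<^sub>R v"] fint by simp
    then show ?thesis using transl[of "t k *\<^sub>R v"] by simp
  qed
  have lim: "(\<lambda>k. s k x) \<longlonglongrightarrow> pderiv f v x" for x
  proof -
    have "((\<lambda>h. f (x + h *\<^sub>R v)) has_real_derivative pderiv f v x) (at 0)"
      using DERIV_line[of f x 0 v] diff by simp
    then have "((\<lambda>h. (f (x + h *\<^sub>R v) - f x) / h) \<longlongrightarrow> pderiv f v x) (at 0)"
      by (simp add: has_field_derivative_iff)
    from filterlim_compose[OF this tat] show ?thesis by (simp add: s_def)
  qed
  have Bd0: "0 \<le> Bd" using Bd[of 0] by simp
  have bound: "norm (s k x) \<le> Bd * indicator L x" for k x
  proof (cases "x \<in> L")
    case True
    obtain z where "0 < z" "z < t k"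
      "f (x + t k *\<^sub>R v) - f (x + 0 *\<^sub>R v) = (t k - 0) * pderiv f v (x + z *\<^sub>R v)"
      using MVT2[of 0 "t k" "\<lambda>h. f (x + h *\<^sub>R v)" "\<lambda>h. pderiv f v (x + h *\<^sub>R v)"]
        tpos(1)[of k] DERIV_line diff by blast
    then have "s k x = pderiv f v (x + z *\<^sub>R v)" using tpos(1)[of k] by (simp add: s_def)
    then show ?thesis using True Bd by simp
  next
    case False
    then have nx: "norm x > R + norm v" by (simp add: L_def mem_cball_0 not_le)
    have "x \<notin> K"
    proof
      assume "x \<in> K" then have "norm x \<le> R" using R(1) by (auto simp: mem_cball_0)
      then show False using nx norm_ge_zero[of v] by linarith
    qed
    moreover have "x + t k *\<^sub>R v \<notin> K"
    proof
      assume "x + t k *\<^sub>R v \<in> K"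
      then have "norm (x + t k *\<^sub>R v) \<le> R" using R(1) by (auto simp: mem_cball_0)
      moreover have "norm x \<le> norm (x + t k *\<^sub>R v) + t k * norm v"
        using norm_triangle_ineq4[of "x + t k *\<^sub>R v" "t k *\<^sub>R v"] tpos(1)[of k] by simp
      moreover have "t k * norm v \<le> norm v" using tpos[of k] by (simp add: mult_left_le_one_le)
      ultimately show False using nx by linarith
    qed
    ultimately show ?thesis using zero False Bd0 by (simp add: s_def)
  qed
  have wint: "integrable lborel (\<lambda>x. Bd * indicator L x)"
    unfolding L_def by (intro integrable_mult_right integrable_real_indicator emeasure_bounded_finite) auto
  have smeas: "s k \<in> borel_measurable lborel" for k
    unfolding s_def using fmeas by measurable
  have pmeas: "pderiv f v \<in> borel_measurable lborel"
    using borel_measurable_continuous_onI[OF cont] by simp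
  have "(\<lambda>k. integral\<^sup>L lborel (s k)) \<longlonglongrightarrow> integral\<^sup>L lborel (pderiv f v)"
    by (rule integral_dominated_convergence[OF pmeas smeas wint]) (use lim bound in auto)
  then have "(\<lambda>k. 0::real) \<longlonglongrightarrow> integral\<^sup>L lborel (pderiv f v)" using sint by simp
  then show ?thesis using LIMSEQ_unique[OF _ tendsto_const] by metis
qed

lemma cpt_pos_lower:
  fixes h :: "'a::metric_space \<Rightarrow> real"
  assumes "compact S" "continuous_on S h" "\<forall>x\<in>S. 0 < h x"
  shows "\<exists>c>0. \<forall>x\<in>S. c \<le> h x"
proof (cases "S = {}")
  case True then show ?thesis by (intro exI[of _ 1]) auto
next
  case False
  from continuous_attains_inf[OF assms(1) False assms(2)] obtain y where "y \<in> S" "\<forall>x\<in>S. h y \<le> h x" by blast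
  then show ?thesis using assms(3) by blast
qed

lemma cpt_bound:
  fixes h :: "'a::metric_space \<Rightarrow> 'b::real_normed_vector"
  assumes "compact S" "continuous_on S h"
  shows "\<exists>B. \<forall>x\<in>S. norm (h x) \<le> B"
proof -
  have "bounded (h ` S)" by (rule compact_imp_bounded, rule compact_continuous_image[OF assms(2,1)])
  then show ?thesis by (auto simp: bounded_iff)
qed

lemma diff_exp: fixes u :: "'a::real_normed_vector \<Rightarrow> real" shows "u differentiable at x \<Longrightarrow> (\<lambda>y. exp (u y)) differentiable at x"
  using DERIV_compose_FDERIV[OF DERIV_exp, of u _ x UNIV] unfolding differentiable_def by blast

lemma pderiv_fi:
  fixes p u s q :: "'a::euclidean_space \<Rightarrow> real"
  assumes "p differentiable at x" "u differentiable at x" "s differentiable at x" "q differentiable at x"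
  shows "pderiv (\<lambda>y. (p y * p y * exp (u y)) * (s y * q y)) i x =
     (p x * p x * exp (u x)) * (s x * pderiv q i x + pderiv s i x * q x) +
     ((p x * pderiv p i x + pderiv p i x * p x) * exp (u x) + p x * p x * (exp (u x) * pderiv u i x)) * (s x * q x)"
    and "(\<lambda>y. (p y * p y * exp (u y)) * (s y * q y)) differentiable at x"
proof -
  have d1: "(\<lambda>y. p y * p y) differentiable at x" using assms by simp
  have d2: "(\<lambda>y. exp (u y)) differentiable at x" using diff_exp assms by blast
  have d3: "(\<lambda>y. p y * p y * exp (u y)) differentiable at x" using d1 d2 by simp
  have d4: "(\<lambda>y. s y * q y) differentiable at x" using assms by simp
  show "(\<lambda>y. (p y * p y * exp (u y)) * (s y * q y)) differentiable at x" using d3 d4 by simp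
  show "pderiv (\<lambda>y. (p y * p y * exp (u y)) * (s y * q y)) i x =
     (p x * p x * exp (u x)) * (s x * pderiv q i x + pderiv s i x * q x) +
     ((p x * pderiv p i x + pderiv p i x * p x) * exp (u x) + p x * p x * (exp (u x) * pderiv u i x)) * (s x * q x)"
    using pderiv_mult[OF d3 d4, of i] pderiv_mult[OF d1 d2, of i] pderiv_mult[OF assms(1) assms(1), of i]
      pderiv_mult[OF assms(3,4), of i] pderiv_exp[OF assms(2), of i] by simp
qed

lemma alg:
  fixes P Q A N MA \<kappa> :: real
  assumes k: "\<kappa> > 0" and A: "0 \<le> A" "A \<le> MA" and kAN: "\<kappa> \<le> A * N"
  shows "P\<^sup>2 \<le> (2/\<kappa>) * (2*P*A*Q + P\<^sup>2*A*N) + (4*MA\<^sup>2/\<kappa>\<^sup>2) * Q\<^sup>2"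
proof -
  have 1: "\<kappa> * P\<^sup>2 \<le> A * N * P\<^sup>2" using kAN by (simp add: mult_right_mono)
  have 2: "0 \<le> (\<kappa>/2) * (P + (2/\<kappa>)*A*Q)\<^sup>2" using k by simp
  have 3: "(\<kappa>/2) * (P + (2/\<kappa>)*A*Q)\<^sup>2 = (\<kappa>/2)*P\<^sup>2 + 2*P*A*Q + (2/\<kappa>)*A\<^sup>2*Q\<^sup>2"
    using k by (simp add: power2_eq_square field_simps)
  have 4: "A\<^sup>2 \<le> MA\<^sup>2" using A by (simp add: power_mono)
  have 5: "(2/\<kappa>)*A\<^sup>2*Q\<^sup>2 \<le> (2/\<kappa>)*MA\<^sup>2*Q\<^sup>2" using 4 k by (intro mult_right_mono mult_left_mono) auto
  have 6: "(\<kappa>/2)*P\<^sup>2 \<le> (2*P*A*Q + P\<^sup>2*A*N) + (2/\<kappa>)*MA\<^sup>2*Q\<^sup>2"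
    using 1 2 3 5 by (simp add: algebra_simps)
  have "(2/\<kappa>) * ((\<kappa>/2)*P\<^sup>2) \<le> (2/\<kappa>) * ((2*P*A*Q + P\<^sup>2*A*N) + (2/\<kappa>)*MA\<^sup>2*Q\<^sup>2)"
    using 6 k by (intro mult_left_mono) auto
  then show ?thesis using k by (simp add: field_simps power2_eq_square)
qed

lemma main_test:
  fixes \<Omega> :: "'a::euclidean_space set" and \<sigma>0 u0 :: "'a \<Rightarrow> real" and G :: "'a \<Rightarrow> 'a"
  assumes bdd: "bounded \<Omega>" and op: "open \<Omega>"
    and sig: "C2_closure \<Omega> \<sigma>0" and sigpos: "\<forall>x\<in>closure \<Omega>. \<sigma>0 x > 0"
    and u2: "Ck 2 \<Omega> u0"
    and div0: "\<forall>x\<in>\<Omega>. divergence (\<lambda>y. \<sigma>0 y *\<^sub>R grad u0 y) x = 0"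
    and ucont: "continuous_on (closure \<Omega>) u0"
    and Gc: "continuous_on (closure \<Omega>) G" and GG: "\<forall>x\<in>\<Omega>. G x = grad u0 x" and G0: "\<forall>x\<in>closure \<Omega>. G x \<noteq> 0"
  shows "\<exists>C0>0. \<forall>\<phi>. test_fun \<Omega> \<phi> \<longrightarrow> L2sq \<Omega> \<phi> \<le> ennreal C0 * L2sq \<Omega> (\<lambda>x. grad u0 x \<bullet> grad \<phi> x)"
proof -
  have cptc: "compact (closure \<Omega>)" using bdd by simp
  obtain U Fs where U: "open U" "closure \<Omega> \<subseteq> U" "Ck 2 U Fs" "\<forall>x\<in>closure \<Omega>. Fs x = \<sigma>0 x"
    using sig unfolding C2_closure_def by blast
  have FsU: "continuous_on U Fs" "\<forall>x\<in>U. Fs differentiable at x" "\<forall>i\<in>Basis. continuous_on U (pderiv Fs i)"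
    using U(3) U(1) by (auto simp: numeral_2_eq_2 differentiable_on_eq_differentiable_at)
  have OmU: "\<Omega> \<subseteq> U" using U(2) closure_subset by blast
  have sdiff: "\<sigma>0 differentiable at x" if "x \<in> \<Omega>" for x
    using diff_local[OF op that, of Fs \<sigma>0] FsU(2) OmU U(4) closure_subset that by blast
  have scont: "continuous_on (closure \<Omega>) \<sigma>0"
    using continuous_on_subset[OF FsU(1) U(2)] U(4) by (metis continuous_on_eq)
  have spc: "continuous_on \<Omega> (pderiv \<sigma>0 i)" if "i \<in> Basis" for i
  proof -
    have "\<forall>x\<in>\<Omega>. pderiv Fs i x = pderiv \<sigma>0 i x"
      using pderiv_local[OF op, of _ Fs \<sigma>0] U(4) closure_subset by blast
    then show ?thesis using continuous_on_subset[OF FsU(3)[rule_format, OF that] OmU] by (metis continuous_on_eq)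
  qed
  have udiff: "\<forall>x\<in>\<Omega>. u0 differentiable at x" and qdiff: "\<forall>i\<in>Basis. \<forall>x\<in>\<Omega>. pderiv u0 i differentiable at x"
    and qcont: "\<forall>i\<in>Basis. continuous_on \<Omega> (pderiv u0 i)"
    and qqcont: "\<forall>i\<in>Basis. \<forall>j\<in>Basis. continuous_on \<Omega> (pderiv (pderiv u0 i) j)"
    using u2 op by (auto simp: numeral_2_eq_2 differentiable_on_eq_differentiable_at)
  have gcont: "continuous_on \<Omega> (grad u0)"
    using continuous_on_subset[OF Gc closure_subset] GG by (metis continuous_on_eq)
  obtain c where c: "c > 0" "\<forall>x\<in>\<Omega>. c \<le> norm (grad u0 x)"
  proof -
    obtain c where "c > 0" "\<forall>x\<in>closure \<Omega>. c \<le> norm (G x)"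
      using cpt_pos_lower[OF cptc, of "\<lambda>x. norm (G x)"] G0 continuous_on_norm[OF Gc] by auto
    then show ?thesis using that GG closure_subset by (metis subsetD)
  qed
  obtain mA where mA: "mA > 0" "\<forall>x\<in>closure \<Omega>. mA \<le> exp (u0 x) * \<sigma>0 x"
  proof -
    have "continuous_on (closure \<Omega>) (\<lambda>x. exp (u0 x) * \<sigma>0 x)"
      by (intro continuous_intros ucont scont)
    then show ?thesis using cpt_pos_lower[OF cptc, of "\<lambda>x. exp (u0 x) * \<sigma>0 x"] sigpos that by auto
  qed
  obtain MA where MA: "\<forall>x\<in>closure \<Omega>. norm (exp (u0 x) * \<sigma>0 x) \<le> MA"
  proof -
    have "continuous_on (closure \<Omega>) (\<lambda>x. exp (u0 x) * \<sigma>0 x)"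
      by (intro continuous_intros ucont scont)
    then show ?thesis using cpt_bound[OF cptc, of "\<lambda>x. exp (u0 x) * \<sigma>0 x"] that by auto
  qed
  define \<kappa> where "\<kappa> = mA * c\<^sup>2"
  have kpos: "\<kappa> > 0" using mA c by (simp add: \<kappa>_def)
  define C1 where "C1 = 4 * MA\<^sup>2 / \<kappa>\<^sup>2"
  have C1: "C1 \<ge> 0" by (simp add: C1_def)
  show ?thesis
  proof (intro exI[of _ "C1 + 1"] conjI allI impI)
    show "C1 + 1 > 0" using C1 by simp
    fix \<phi> assume tf: "test_fun \<Omega> \<phi>"
    define K where "K = closure {x. \<phi> x \<noteq> 0}"
    have Kc: "compact K" and KO: "K \<subseteq> \<Omega>" and phiinf: "Cinf UNIV \<phi>"
      using tf unfolding test_fun_def K_def by auto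
    have oK: "open (- K)" using Kc by (simp add: compact_imp_closed open_Compl)
    have phi1: "Ck (Suc 0) UNIV \<phi>" using phiinf unfolding Cinf_def by blast
    then have phic: "continuous_on UNIV \<phi>" and phid': "\<phi> differentiable_on UNIV"
      and pphic: "\<And>i. i \<in> Basis \<Longrightarrow> continuous_on UNIV (pderiv \<phi> i)"
      by simp_all
    have phid: "\<phi> differentiable at x" for x
      using phid' differentiable_on_eq_differentiable_at[of UNIV \<phi>] by simp
    have sub: "{x. \<phi> x \<noteq> 0} \<subseteq> K" unfolding K_def by (rule closure_subset)
    have phi0: "\<phi> x = 0" if "x \<notin> K" for x
      using that sub by blast
    have pphi0: "pderiv \<phi> i x = 0" if "x \<notin> K" for x i
      by (rule pderiv_zero_local[OF oK]) (use that phi0 in auto)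
    have gphi0: "grad \<phi> x = 0" if "x \<notin> K" for x
      using pphi0[OF that] by (simp add: grad_def)
    have gphic: "continuous_on UNIV (grad \<phi>)"
      unfolding grad_def by (intro continuous_intros pphic)
    have UN: "\<Omega> \<union> - K = UNIV" using KO by blast
    have u0c: "continuous_on \<Omega> u0" using continuous_on_subset[OF ucont closure_subset] .
    have s0c: "continuous_on \<Omega> \<sigma>0" using continuous_on_subset[OF scont closure_subset] .
    define f where "f i y = (\<phi> y * \<phi> y * exp (u0 y)) * (\<sigma>0 y * pderiv u0 i y)" for i y
    define E where "E i x = (\<phi> x * \<phi> x * exp (u0 x)) * (\<sigma>0 x * pderiv (pderiv u0 i) i x + pderiv \<sigma>0 i x * pderiv u0 i x) +
     ((\<phi> x * pderiv \<phi> i x + pderiv \<phi> i x * \<phi> x) * exp (u0 x) + \<phi> x * \<phi> x * (exp (u0 x) * pderiv u0 i x)) * (\<sigma>0 x * pderiv u0 i x)" for i x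
    have fz: "f i y = 0" if "y \<notin> K" for i y using phi0[OF that] by (simp add: f_def)
    have fdiff: "f i differentiable at x" if "i \<in> Basis" for i x
    proof (cases "x \<in> \<Omega>")
      case True
      show ?thesis unfolding f_def
        by (rule pderiv_fi(2)) (use True that phid udiff sdiff qdiff in auto)
    next
      case False then have "x \<in> - K" using KO by blast
      then show ?thesis using diff_local[OF oK, of x "\<lambda>_. 0" "f i"] fz by auto
    qed
    have fder: "pderiv (f i) i x = E i x" if "i \<in> Basis" "x \<in> \<Omega>" for i x
      unfolding f_def E_def by (rule pderiv_fi(1)) (use that phid udiff sdiff qdiff in auto)
    have fder0: "pderiv (f i) i x = 0" if "x \<notin> K" for i x
      by (rule pderiv_zero_local[OF oK]) (use that fz in auto)
    have fcont: "continuous_on UNIV (pderiv (f i) i)" if i: "i \<in> Basis" for i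
    proof -
      have "continuous_on \<Omega> (E i)" unfolding E_def
        using phic pphic[OF i] u0c s0c spc[OF i] qcont i qqcont
        by (intro continuous_intros) (auto intro: continuous_on_subset)
      then have 1: "continuous_on \<Omega> (pderiv (f i) i)" using fder[OF i] by (metis continuous_on_eq)
      have 2: "continuous_on (- K) (pderiv (f i) i)"
        using fder0 continuous_on_const[of "-K" 0] by (metis ComplD continuous_on_eq)
      show ?thesis using continuous_on_open_Un[OF op oK 1 2] UN by simp
    qed
    have fint0: "integral\<^sup>L lborel (pderiv (f i) i) = 0" if "i \<in> Basis" for i
      by (rule integral_pderiv_zero[OF fdiff[OF that] fcont[OF that] Kc fz])
    have fint: "integrable lborel (pderiv (f i) i)" if "i \<in> Basis" for i
      by (rule integrable_cont_cpt[OF fcont[OF that] Kc fder0])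
    define D where "D x = (\<Sum>i\<in>Basis. pderiv (f i) i x)" for x
    have Dint: "integrable lborel D" unfolding D_def using integrable_sum[where I=Basis and f="\<lambda>i. pderiv (f i) i"] fint by simp
    have D0: "integral\<^sup>L lborel D = 0" unfolding D_def using integral_sum[where I=Basis and f="\<lambda>i. pderiv (f i) i"] fint fint0 by simp
    define Q where "Q x = grad u0 x \<bullet> grad \<phi> x" for x
    have Qz: "Q x = 0" if "x \<notin> K" for x using gphi0[OF that] by (simp add: Q_def)
    have Qcont: "continuous_on UNIV Q"
    proof -
      have 1: "continuous_on \<Omega> Q" unfolding Q_def
        using gcont continuous_on_subset[OF gphic] by (intro continuous_intros) auto
      have 2: "continuous_on (- K) Q"
        using Qz continuous_on_const[of "-K" 0] by (metis ComplD continuous_on_eq)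
      show ?thesis using continuous_on_open_Un[OF op oK 1 2] UN by simp
    qed
    have Dform: "D x = 2 * \<phi> x * (exp (u0 x) * \<sigma>0 x) * Q x + (\<phi> x)\<^sup>2 * (exp (u0 x) * \<sigma>0 x) * (norm (grad u0 x))\<^sup>2"
      if x: "x \<in> \<Omega>" for x
    proof -
      let ?p = "\<phi> x" and ?e = "exp (u0 x)" and ?s = "\<sigma>0 x"
      have divz: "(\<Sum>i\<in>(Basis::'a set). \<sigma>0 x * pderiv (pderiv u0 i) i x + pderiv \<sigma>0 i x * pderiv u0 i x) = 0"
      proof -
        have "(\<Sum>i\<in>(Basis::'a set). \<sigma>0 x * pderiv (pderiv u0 i) i x + pderiv \<sigma>0 i x * pderiv u0 i x)
              = (\<Sum>i\<in>(Basis::'a set). pderiv (\<lambda>y. (\<sigma>0 y *\<^sub>R grad u0 y) \<bullet> i) i x)"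
        proof (rule sum.cong[OF refl])
          fix i :: 'a assume i: "i \<in> Basis"
          have "(\<lambda>y. (\<sigma>0 y *\<^sub>R grad u0 y) \<bullet> i) = (\<lambda>y. \<sigma>0 y * pderiv u0 i y)"
            using i by (simp add: grad_inner_basis)
          then show "\<sigma>0 x * pderiv (pderiv u0 i) i x + pderiv \<sigma>0 i x * pderiv u0 i x
                = pderiv (\<lambda>y. (\<sigma>0 y *\<^sub>R grad u0 y) \<bullet> i) i x"
            using pderiv_mult[OF sdiff[OF x], of "pderiv u0 i" i] qdiff i x by simp
        qed
        also have "\<dots> = 0" using div0 x unfolding divergence_def by simp
        finally show ?thesis .
      qed
      have "D x = (\<Sum>i\<in>Basis. E i x)" unfolding D_def using fder x by simp
      also have "\<dots> = (\<Sum>i\<in>Basis. (?p * ?p * ?e) * (\<sigma>0 x * pderiv (pderiv u0 i) i x + pderiv \<sigma>0 i x * pderiv u0 i x)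
           + (2 * ?p * ?e * ?s) * (pderiv u0 i x * pderiv \<phi> i x) + (?p * ?p * ?e * ?s) * (pderiv u0 i x * pderiv u0 i x))"
        unfolding E_def by (rule sum.cong[OF refl]) (simp add: algebra_simps)
      also have "\<dots> = (?p * ?p * ?e) * (\<Sum>i\<in>Basis. \<sigma>0 x * pderiv (pderiv u0 i) i x + pderiv \<sigma>0 i x * pderiv u0 i x)
           + (2 * ?p * ?e * ?s) * (\<Sum>i\<in>Basis. pderiv u0 i x * pderiv \<phi> i x) + (?p * ?p * ?e * ?s) * (\<Sum>i\<in>Basis. pderiv u0 i x * pderiv u0 i x)"
        by (simp add: sum.distrib sum_distrib_left distrib_left)
      also have "\<dots> = (2 * ?p * ?e * ?s) * Q x + (?p * ?p * ?e * ?s) * (norm (grad u0 x))\<^sup>2"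
        unfolding divz Q_def grad_inner[symmetric] power2_norm_eq_inner by simp
      finally show ?thesis by (simp add: power2_eq_square algebra_simps)
    qed
    have pw: "(\<phi> x)\<^sup>2 \<le> (2/\<kappa>) * D x + C1 * (Q x)\<^sup>2" for x
    proof (cases "x \<in> \<Omega>")
      case True
      let ?A = "exp (u0 x) * \<sigma>0 x" and ?N = "(norm (grad u0 x))\<^sup>2"
      have xc: "x \<in> closure \<Omega>" using True closure_subset by blast
      have A0: "0 \<le> ?A" using sigpos xc by (simp add: less_imp_le)
      have AM: "?A \<le> MA" using MA xc by fastforce
      have cN: "c\<^sup>2 \<le> ?N" using c True by (simp add: power_mono)
      have "\<kappa> \<le> ?A * ?N" unfolding \<kappa>_def using mA xc cN c by (intro mult_mono) auto
      from alg[OF kpos A0 AM this, of "\<phi> x" "Q x"] show ?thesis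
        unfolding Dform[OF True] C1_def by simp
    next
      case False then have "x \<notin> K" using KO by blast
      then show ?thesis using False phi0 Qz D_def fder0 by simp
    qed
    have P2int: "integrable lborel (\<lambda>x. (\<phi> x)\<^sup>2)"
      by (rule integrable_cont_cpt[OF _ Kc]) (use phic phi0 in \<open>auto intro!: continuous_intros\<close>)
    have Q2int: "integrable lborel (\<lambda>x. (Q x)\<^sup>2)"
      by (rule integrable_cont_cpt[OF _ Kc]) (use Qcont Qz in \<open>auto intro!: continuous_intros\<close>)
    have "integral\<^sup>L lborel (\<lambda>x. (\<phi> x)\<^sup>2) \<le> integral\<^sup>L lborel (\<lambda>x. (2/\<kappa>) * D x + C1 * (Q x)\<^sup>2)"
      using pw P2int Dint Q2int by (intro integral_mono) auto
    also have "\<dots> = C1 * integral\<^sup>L lborel (\<lambda>x. (Q x)\<^sup>2)"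
      using Dint Q2int D0 by simp
    finally have ineq: "integral\<^sup>L lborel (\<lambda>x. (\<phi> x)\<^sup>2) \<le> C1 * integral\<^sup>L lborel (\<lambda>x. (Q x)\<^sup>2)" .
    have L1: "L2sq \<Omega> \<phi> = ennreal (integral\<^sup>L lborel (\<lambda>x. (\<phi> x)\<^sup>2))"
    proof -
      have "L2sq \<Omega> \<phi> = (\<integral>\<^sup>+x. ennreal ((\<phi> x)\<^sup>2) \<partial>lborel)"
        unfolding L2sq_def using phi0 KO by (intro nn_integral_cong) (auto simp: indicator_def)
      also have "\<dots> = ennreal (integral\<^sup>L lborel (\<lambda>x. (\<phi> x)\<^sup>2))"
        using P2int by (intro nn_integral_eq_integral) auto
      finally show ?thesis .
    qed
    have L2: "L2sq \<Omega> (\<lambda>x. grad u0 x \<bullet> grad \<phi> x) = ennreal (integral\<^sup>L lborel (\<lambda>x. (Q x)\<^sup>2))"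
    proof -
      have "L2sq \<Omega> (\<lambda>x. grad u0 x \<bullet> grad \<phi> x) = (\<integral>\<^sup>+x. ennreal ((Q x)\<^sup>2) \<partial>lborel)"
        unfolding L2sq_def Q_def[symmetric] using Qz KO by (intro nn_integral_cong) (auto simp: indicator_def)
      also have "\<dots> = ennreal (integral\<^sup>L lborel (\<lambda>x. (Q x)\<^sup>2))"
        using Q2int by (intro nn_integral_eq_integral) auto
      finally show ?thesis .
    qed
    have Qnn: "0 \<le> integral\<^sup>L lborel (\<lambda>x. (Q x)\<^sup>2)" by simp
    have "ennreal (integral\<^sup>L lborel (\<lambda>x. (\<phi> x)\<^sup>2)) \<le> ennreal ((C1 + 1) * integral\<^sup>L lborel (\<lambda>x. (Q x)\<^sup>2))"
      using ineq Qnn by (intro ennreal_leI) (smt (verit) mult_right_mono)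
    then show "L2sq \<Omega> \<phi> \<le> ennreal (C1 + 1) * L2sq \<Omega> (\<lambda>x. grad u0 x \<bullet> grad \<phi> x)"
      unfolding L1 L2 using C1 Qnn by (simp add: ennreal_mult)
  qed
qed

lemma L2sq_tri:
  fixes \<Omega> :: "'a::euclidean_space set"
  assumes "\<alpha> \<ge> 0" "\<beta> \<ge> 0"
    and ma: "(\<lambda>x. indicator \<Omega> x * a x) \<in> borel_measurable lborel"
    and mb: "(\<lambda>x. indicator \<Omega> x * b x) \<in> borel_measurable lborel"
    and pw: "\<And>x. x \<in> \<Omega> \<Longrightarrow> (c x)\<^sup>2 \<le> \<alpha> * (a x)\<^sup>2 + \<beta> * (b x)\<^sup>2"
  shows "L2sq \<Omega> c \<le> ennreal \<alpha> * L2sq \<Omega> a + ennreal \<beta> * L2sq \<Omega> b"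
proof -
  have ea: "\<And>x. ennreal ((a x)\<^sup>2) * indicator \<Omega> x = ennreal ((indicator \<Omega> x * a x)\<^sup>2)"
    by (simp add: indicator_def)
  have eb: "\<And>x. ennreal ((b x)\<^sup>2) * indicator \<Omega> x = ennreal ((indicator \<Omega> x * b x)\<^sup>2)"
    by (simp add: indicator_def)
  have "L2sq \<Omega> c = (\<integral>\<^sup>+x. ennreal ((c x)\<^sup>2) * indicator \<Omega> x \<partial>lborel)" by (simp add: L2sq_def)
  also have "\<dots> \<le> (\<integral>\<^sup>+x. ennreal \<alpha> * ennreal ((indicator \<Omega> x * a x)\<^sup>2) + ennreal \<beta> * ennreal ((indicator \<Omega> x * b x)\<^sup>2) \<partial>lborel)"
  proof (rule nn_integral_mono)
    fix x
    show "ennreal ((c x)\<^sup>2) * indicator \<Omega> x \<le> ennreal \<alpha> * ennreal ((indicator \<Omega> x * a x)\<^sup>2) + ennreal \<beta> * ennreal ((indicator \<Omega> x * b x)\<^sup>2)"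
    proof (cases "x \<in> \<Omega>")
      case True
      have "ennreal ((c x)\<^sup>2) \<le> ennreal (\<alpha> * (a x)\<^sup>2 + \<beta> * (b x)\<^sup>2)" using pw[OF True] by (rule ennreal_leI)
      also have "\<dots> = ennreal \<alpha> * ennreal ((a x)\<^sup>2) + ennreal \<beta> * ennreal ((b x)\<^sup>2)"
        using assms(1,2) by (simp add: ennreal_plus ennreal_mult)
      finally show ?thesis using True by simp
    qed simp
  qed
  also have "\<dots> = ennreal \<alpha> * (\<integral>\<^sup>+x. ennreal ((indicator \<Omega> x * a x)\<^sup>2) \<partial>lborel) + ennreal \<beta> * (\<integral>\<^sup>+x. ennreal ((indicator \<Omega> x * b x)\<^sup>2) \<partial>lborel)"
    using ma mb by (simp add: nn_integral_add nn_integral_cmult)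
  also have "\<dots> = ennreal \<alpha> * L2sq \<Omega> a + ennreal \<beta> * L2sq \<Omega> b"
    by (simp add: L2sq_def ea eb)
  finally show ?thesis .
qed

lemma sq_tri: fixes x y :: real shows "(x + y)\<^sup>2 \<le> 2 * x\<^sup>2 + 2 * y\<^sup>2"
proof -
  have "2 * x\<^sup>2 + 2 * y\<^sup>2 - (x + y)\<^sup>2 = (x - y)\<^sup>2" by (simp add: power2_eq_square algebra_simps)
  moreover have "0 \<le> (x - y)\<^sup>2" by simp
  ultimately show ?thesis by linarith
qed

theorem lemma3p2:
  fixes \<Omega> :: "'a::euclidean_space set"
    and \<sigma>0 u0 f :: "'a \<Rightarrow> real"
    and \<alpha> :: real
  assumes "bounded \<Omega>" and "open \<Omega>" and "simply_connected \<Omega>" and "smooth_boundary \<Omega>"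
    and "C2_closure \<Omega> \<sigma>0" and "\<forall>x\<in>closure \<Omega>. \<sigma>0 x > 0"
    and "0 < \<alpha>" and "\<alpha> < 1" and "C2alpha_boundary \<alpha> \<Omega> f"
    and "Ck 2 \<Omega> u0"
    and "\<forall>x\<in>\<Omega>. divergence (\<lambda>y. \<sigma>0 y *\<^sub>R grad u0 y) x = 0"
    and "continuous_on (closure \<Omega>) u0" and "\<forall>x\<in>frontier \<Omega>. u0 x = f x"
    and "\<exists>G. continuous_on (closure \<Omega>) G \<and> (\<forall>x\<in>\<Omega>. G x = grad u0 x)
              \<and> (\<forall>x\<in>closure \<Omega>. G x \<noteq> 0)"
  shows "\<exists>C>0. \<forall>h g. H1_0 \<Omega> h g \<longrightarrow>
           L2sq \<Omega> h \<le> ennreal (C\<^sup>2) * L2sq \<Omega> (\<lambda>x. grad u0 x \<bullet> g x)"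
proof -
  obtain G where Gc: "continuous_on (closure \<Omega>) G" and GG: "\<forall>x\<in>\<Omega>. G x = grad u0 x"
    and G0: "\<forall>x\<in>closure \<Omega>. G x \<noteq> 0" using assms(14) by blast
  obtain C0 where C0: "C0 > 0" and C0t: "\<And>\<phi>. test_fun \<Omega> \<phi> \<Longrightarrow> L2sq \<Omega> \<phi> \<le> ennreal C0 * L2sq \<Omega> (\<lambda>x. grad u0 x \<bullet> grad \<phi> x)"
    using main_test[OF assms(1,2,5,6,10,11,12) Gc GG G0] by blast
  have cptc: "compact (closure \<Omega>)" using assms(1) by simp
  obtain B0 where B0: "\<forall>x\<in>closure \<Omega>. norm (G x) \<le> B0" using cpt_bound[OF cptc Gc] by blast
  define B where "B = max B0 0"
  have B: "\<And>x. x \<in> \<Omega> \<Longrightarrow> norm (grad u0 x) \<le> B" "B \<ge> 0"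
    using B0 GG closure_subset unfolding B_def by fastforce+
  have Om: "\<Omega> \<in> sets lborel" using assms(2) by simp
  have gcont: "continuous_on \<Omega> (grad u0)"
    using continuous_on_subset[OF Gc closure_subset] GG by (metis continuous_on_eq)
  have gmeas: "(\<lambda>x. indicator \<Omega> x *\<^sub>R grad u0 x) \<in> borel_measurable lborel"
    using borel_measurable_continuous_on_indicator[OF _ gcont] assms(2) by simp
  define Dc where "Dc = 4 * C0 * B\<^sup>2 + 2"
  show ?thesis
  proof (intro exI[of _ "2 * sqrt C0"] conjI allI impI)
    show "2 * sqrt C0 > 0" using C0 by simp
    fix h g assume H: "H1_0 \<Omega> h g"
    then obtain \<phi> where tf: "\<And>k. test_fun \<Omega> (\<phi> k)"
      and lim: "(\<lambda>k. L2sq \<Omega> (\<lambda>x. \<phi> k x - h x) + L2sq \<Omega> (\<lambda>x. norm (grad (\<phi> k) x - g x))) \<longlonglongrightarrow> 0"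
      unfolding H1_0_def by blast
    have hm: "h \<in> borel_measurable lborel" and gm: "g \<in> borel_measurable lborel"
      using H unfolding H1_0_def H1_def by auto
    define X where "X = L2sq \<Omega> (\<lambda>x. grad u0 x \<bullet> g x)"
    define S where "S k = L2sq \<Omega> (\<lambda>x. \<phi> k x - h x) + L2sq \<Omega> (\<lambda>x. norm (grad (\<phi> k) x - g x))" for k
    have key: "L2sq \<Omega> h \<le> ennreal (4 * C0) * X + ennreal Dc * S k" for k
    proof -
      have phi1: "Ck (Suc 0) UNIV (\<phi> k)" using tf[of k] unfolding test_fun_def Cinf_def by blast
      then have phic: "continuous_on UNIV (\<phi> k)"
        and pphic: "\<And>i. i \<in> Basis \<Longrightarrow> continuous_on UNIV (pderiv (\<phi> k) i)" by simp_all
      have gphic: "continuous_on UNIV (grad (\<phi> k))"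
      proof -
        have "grad (\<phi> k) = (\<lambda>x. \<Sum>i\<in>Basis. pderiv (\<phi> k) i x *\<^sub>R i)" by (rule ext) (simp add: grad_def)
        then show ?thesis using pphic by (auto intro!: continuous_intros)
      qed
      have pm: "\<phi> k \<in> borel_measurable lborel" using borel_measurable_continuous_onI[OF phic] by simp
      have gpm: "grad (\<phi> k) \<in> borel_measurable lborel" using borel_measurable_continuous_onI[OF gphic] by simp
      note [measurable] = pm hm gm gpm Om
      have 1: "L2sq \<Omega> h \<le> ennreal 2 * L2sq \<Omega> (\<phi> k) + ennreal 2 * L2sq \<Omega> (\<lambda>x. \<phi> k x - h x)"
      proof (rule L2sq_tri)
        show "(\<lambda>x. indicator \<Omega> x * \<phi> k x) \<in> borel_measurable lborel" by measurable
        show "(\<lambda>x. indicator \<Omega> x * (\<phi> k x - h x)) \<in> borel_measurable lborel" by measurable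
        fix x show "(h x)\<^sup>2 \<le> 2 * (\<phi> k x)\<^sup>2 + 2 * (\<phi> k x - h x)\<^sup>2"
          using sq_tri[of "\<phi> k x" "h x - \<phi> k x"] by (simp add: power2_commute)
      qed auto
      have 2: "L2sq \<Omega> (\<lambda>x. grad u0 x \<bullet> grad (\<phi> k) x) \<le> ennreal 2 * X + ennreal (2 * B\<^sup>2) * L2sq \<Omega> (\<lambda>x. norm (grad (\<phi> k) x - g x))"
        unfolding X_def
      proof (rule L2sq_tri)
        have eq: "(\<lambda>x. indicator \<Omega> x * (grad u0 x \<bullet> g x)) = (\<lambda>x. (indicator \<Omega> x *\<^sub>R grad u0 x) \<bullet> g x)"
          by (simp add: indicator_def)
        have m: "(\<lambda>x. (indicator \<Omega> x *\<^sub>R grad u0 x) \<bullet> g x) \<in> borel_measurable lborel"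
          using gmeas gm by (rule borel_measurable_inner)
        show "(\<lambda>x. indicator \<Omega> x * (grad u0 x \<bullet> g x)) \<in> borel_measurable lborel"
          unfolding eq by (rule m)
        show "(\<lambda>x. indicator \<Omega> x * norm (grad (\<phi> k) x - g x)) \<in> borel_measurable lborel" by measurable
        fix x assume x: "x \<in> \<Omega>"
        let ?a = "grad u0 x \<bullet> g x" and ?b = "grad u0 x \<bullet> (grad (\<phi> k) x - g x)"
        have e: "grad u0 x \<bullet> grad (\<phi> k) x = ?a + ?b" by (simp add: inner_diff_right)
        have "\<bar>?b\<bar> \<le> norm (grad u0 x) * norm (grad (\<phi> k) x - g x)" by (rule Cauchy_Schwarz_ineq2)
        also have "\<dots> \<le> B * norm (grad (\<phi> k) x - g x)" using B(1)[OF x] by (simp add: mult_right_mono)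
        finally have "?b\<^sup>2 \<le> (B * norm (grad (\<phi> k) x - g x))\<^sup>2"
          by (metis abs_ge_zero order.trans power2_abs power_mono)
        then have "?b\<^sup>2 \<le> B\<^sup>2 * (norm (grad (\<phi> k) x - g x))\<^sup>2" by (simp add: power_mult_distrib)
        moreover have "(?a + ?b)\<^sup>2 \<le> 2 * ?a\<^sup>2 + 2 * ?b\<^sup>2"
          by (rule sq_tri)
        ultimately show "(grad u0 x \<bullet> grad (\<phi> k) x)\<^sup>2 \<le> 2 * ?a\<^sup>2 + 2 * B\<^sup>2 * (norm (grad (\<phi> k) x - g x))\<^sup>2"
          unfolding e by linarith
      qed auto
      let ?M = "L2sq \<Omega> (\<lambda>x. \<phi> k x - h x)" and ?N = "L2sq \<Omega> (\<lambda>x. norm (grad (\<phi> k) x - g x))"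
      have "L2sq \<Omega> h \<le> ennreal 2 * (ennreal C0 * (ennreal 2 * X + ennreal (2 * B\<^sup>2) * ?N)) + ennreal 2 * ?M"
        using 1 C0t[OF tf[of k]] 2 by (meson add_mono mult_left_mono order.trans order_refl zero_le)
      also have "\<dots> = (ennreal 2 * (ennreal C0 * ennreal 2)) * X + (ennreal 2 * (ennreal C0 * ennreal (2 * B\<^sup>2))) * ?N + ennreal 2 * ?M"
        by (simp only: distrib_left mult.assoc)
      also have "\<dots> = ennreal (4 * C0) * X + ennreal (4 * C0 * B\<^sup>2) * ?N + ennreal 2 * ?M"
      proof -
        have m1: "ennreal (2 * (C0 * 2)) = ennreal 2 * ennreal (C0 * 2)" by (rule ennreal_mult) (use C0 in auto)
        have m2: "ennreal (C0 * 2) = ennreal C0 * ennreal 2" by (rule ennreal_mult) (use C0 in auto)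
        have m3: "ennreal (2 * (C0 * (2 * B\<^sup>2))) = ennreal 2 * ennreal (C0 * (2 * B\<^sup>2))" by (rule ennreal_mult) (use C0 in auto)
        have m4: "ennreal (C0 * (2 * B\<^sup>2)) = ennreal C0 * ennreal (2 * B\<^sup>2)" by (rule ennreal_mult) (use C0 in auto)
        have a1: "2 * (C0 * 2) = 4 * C0" and a2: "2 * (C0 * (2 * B\<^sup>2)) = 4 * C0 * B\<^sup>2" by simp_all
        have e1: "ennreal 2 * (ennreal C0 * ennreal 2) = ennreal (4 * C0)"
          using m1 m2 a1 by metis
        have e2: "ennreal 2 * (ennreal C0 * ennreal (2 * B\<^sup>2)) = ennreal (4 * C0 * B\<^sup>2)"
          using m3 m4 a2 by metis
        show ?thesis unfolding e1 e2 ..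
      qed
      also have "\<dots> \<le> ennreal (4 * C0) * X + ennreal Dc * ?N + ennreal Dc * ?M"
        unfolding Dc_def using C0
        by (intro add_mono order_refl mult_right_mono ennreal_leI) auto
      also have "\<dots> = ennreal (4 * C0) * X + ennreal Dc * S k"
        by (simp add: S_def distrib_left add.assoc add.commute)
      finally show ?thesis .
    qed
    have "(\<lambda>k. ennreal (4 * C0) * X + ennreal Dc * S k) \<longlonglongrightarrow> ennreal (4 * C0) * X + ennreal Dc * 0"
      using lim unfolding S_def[symmetric]
      by (intro tendsto_add tendsto_const ennreal_tendsto_cmult) (auto simp: S_def)
    then have "L2sq \<Omega> h \<le> ennreal (4 * C0) * X"
      using LIMSEQ_le_const[of _ _ "L2sq \<Omega> h"] key by auto
    moreover have "(2 * sqrt C0)\<^sup>2 = 4 * C0" using C0 by (simp add: power_mult_distrib)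
    ultimately show "L2sq \<Omega> h \<le> ennreal ((2 * sqrt C0)\<^sup>2) * L2sq \<Omega> (\<lambda>x. grad u0 x \<bullet> g x)"
      by (simp add: X_def)
  qed
qed

end
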